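(* Let $T$ be a finite tree with $m$ interior edges, and let $\mathcal{S}$ be the collection of all subtrees of $T$ that have exactly one interior edge. Then $$\sum_{S\in\mathcal{S}}(-1)^{|S|}=-m,$$ where $|S|$ denotes the number of edges of $S$.
   Context: A subtree of $T$ is a nonempty connected subgraph of $T$, identified with its (nonempty) edge set. An edge of a subtree $S$ is a leaf (edge) of $S$ if one of its endpoints has degree $1$ in $S$; an edge of $S$ is interior in $S$ if it is not a leaf of $S$. An interior edge of $T$ is an edge of $T$ that is interior in $T$ itself, i.e. neither endpoint is a leaf vertex of $T$. *)

theory Defs
  imports Main
begin

definition simple_graph :: "'a set \<Rightarrow> 'a set set \<Rightarrow> bool" where
  "simple_graph V E \<longleftrightarrow> finite V \<and> (\<forall>e\<in>E. e \<subseteq> V \<and> card e = 2)"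

definition adj :: "'a set set \<Rightarrow> 'a \<Rightarrow> 'a \<Rightarrow> bool" where
  "adj E u v \<longleftrightarrow> {u, v} \<in> E"

definition connected_graph :: "'a set \<Rightarrow> 'a set set \<Rightarrow> bool" where
  "connected_graph V E \<longleftrightarrow> (\<forall>u\<in>V. \<forall>v\<in>V. (adj E)\<^sup>*\<^sup>* u v)"

definition is_cycle :: "'a set set \<Rightarrow> 'a list \<Rightarrow> bool" where
  "is_cycle E vs \<longleftrightarrow> length vs \<ge> 3 \<and> distinct vs \<and>
     (\<forall>i < length vs. {vs ! i, vs ! ((i + 1) mod length vs)} \<in> E)"

definition acyclic_graph :: "'a set set \<Rightarrow> bool" where
  "acyclic_graph E \<longleftrightarrow> \<not> (\<exists>vs. is_cycle E vs)"

definition is_tree :: "'a set \<Rightarrow> 'a set set \<Rightarrow> bool" where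
  "is_tree V E \<longleftrightarrow> simple_graph V E \<and> V \<noteq> {} \<and> connected_graph V E \<and> acyclic_graph E"

text \<open>A subtree of T = (V,E): a nonempty connected subgraph, identified with its nonempty edge set.\<close>
definition subtree :: "'a set set \<Rightarrow> 'a set set \<Rightarrow> bool" where
  "subtree E S \<longleftrightarrow> S \<subseteq> E \<and> S \<noteq> {} \<and> connected_graph (\<Union>S) S"

definition degree_in :: "'a set set \<Rightarrow> 'a \<Rightarrow> nat" where
  "degree_in S v = card {e\<in>S. v \<in> e}"

definition leaf_edge :: "'a set set \<Rightarrow> 'a set \<Rightarrow> bool" where
  "leaf_edge S e \<longleftrightarrow> e \<in> S \<and> (\<exists>v\<in>e. degree_in S v = 1)"

definition interior_edge :: "'a set set \<Rightarrow> 'a set \<Rightarrow> bool" where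
  "interior_edge S e \<longleftrightarrow> e \<in> S \<and> \<not> leaf_edge S e"

end

theory Submission imports Defs begin

lemma pow_alt: "finite X \<Longrightarrow> (\<Sum>A\<in>Pow X. (-1::int) ^ card A) = (if X = {} then 1 else 0)"
proof (induction X rule: finite_induct)
  case empty then show ?case by simp
next
  case (insert x X)
  have "Pow (insert x X) = Pow X \<union> insert x ` Pow X" by (rule Pow_insert)
  moreover have "Pow X \<inter> insert x ` Pow X = {}" using insert by auto
  moreover have "inj_on (insert x) (Pow X)" using insert.hyps(2) unfolding inj_on_def by (metis PowD insert_ident subsetD)
  moreover have "(\<Sum>A\<in>Pow X. (-1::int) ^ card (insert x A)) = - (\<Sum>A\<in>Pow X. (-1::int) ^ card A)"
    unfolding sum_negf[symmetric]
    by (rule sum.cong) (use insert in \<open>auto simp: finite_subset card_insert_if\<close>)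
  ultimately have "(\<Sum>A\<in>Pow (insert x X). (-1::int) ^ card A) = 0"
    using insert by (simp add: sum.union_disjoint sum.reindex)
  then show ?case by simp
qed

lemma nonempty_alt:
  assumes "finite X" "X \<noteq> {}"
  shows "(\<Sum>A\<in>{A. A \<subseteq> X \<and> A \<noteq> {}}. (-1::int) ^ card A) = -1"
proof -
  have "Pow X = insert {} {A. A \<subseteq> X \<and> A \<noteq> {}}" by auto
  then have "(\<Sum>A\<in>Pow X. (-1::int) ^ card A) = 1 + (\<Sum>A\<in>{A. A \<subseteq> X \<and> A \<noteq> {}}. (-1::int) ^ card A)"
    using assms by (simp add: sum.insert_if)
  then show ?thesis using pow_alt[OF assms(1)] assms(2) by simp
qed

lemma card2_obtain:
  assumes "card f = 2" "u \<in> f" shows "\<exists>x. f = {u,x} \<and> x \<noteq> u"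
proof -
  obtain a b where ab: "f = {a,b}" "a \<noteq> b" using assms(1) unfolding card_2_iff by blast
  show ?thesis
  proof (cases "u = a")
    case True then show ?thesis using ab by (intro exI[of _ b]) auto
  next
    case False then have "u = b" using ab assms(2) by auto
    then show ?thesis using ab by (intro exI[of _ a]) auto
  qed
qed

lemma card2_eq:
  assumes "card f = 2" "u \<in> f" "v \<in> f" "u \<noteq> v" shows "f = {u,v}"
proof -
  obtain x where "f = {u,x}" "x \<noteq> u" using card2_obtain[OF assms(1,2)] by blast
  then show ?thesis using assms(3,4) by auto
qed

lemma deg_ge2:
  assumes "finite S" "e \<in> S" "z \<in> e" "degree_in S z \<noteq> 1"
  shows "\<exists>f\<in>S. z \<in> f \<and> f \<noteq> e"
proof (rule ccontr)
  assume na: "\<not> ?thesis"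
  have "{h\<in>S. z \<in> h} = {e}"
  proof
    show "{h\<in>S. z \<in> h} \<subseteq> {e}" using na by blast
    show "{e} \<subseteq> {h\<in>S. z \<in> h}" using assms(2,3) by blast
  qed
  then show False using assms(4) by (simp add: degree_in_def)
qed

lemma deg1_unique:
  assumes "degree_in S x = 1" "f\<in>S" "x\<in>f" "g\<in>S" "x\<in>g" shows "f=g"
proof -
  obtain a where "{h\<in>S. x \<in> h} = {a}" using assms(1) unfolding degree_in_def by (rule card_1_singletonE)
  then have "f \<in> {a}" "g \<in> {a}" using assms(2-5) by blast+
  then show ?thesis by simp
qed

lemma fwd:
  assumes fin: "finite S" and c2: "\<forall>f\<in>S. card f = 2"
    and conn: "connected_graph (\<Union>S) S" and eS: "e \<in> S"
    and eint: "interior_edge S e"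
    and others: "\<forall>f\<in>S. f \<noteq> e \<longrightarrow> leaf_edge S f"
    and euv: "e = {u,v}"
  shows "\<forall>f\<in>S. u \<in> f \<or> v \<in> f"
proof -
  have nl: "\<forall>z\<in>e. degree_in S z \<noteq> 1" using eint unfolding interior_edge_def leaf_edge_def by blast
  have L1: "degree_in S x = 1" if h: "f \<in> S" "f \<noteq> e" "w \<in> f" "w \<in> e" "x \<in> f" "x \<notin> e" for f w x
  proof -
    have wx: "w \<noteq> x" using h(4,6) by blast
    have fwx: "f = {w,x}" using card2_eq[OF _ h(3,5) wx] c2 h(1) by blast
    obtain z where z: "z \<in> f" "degree_in S z = 1"
      using others h(1,2) unfolding leaf_edge_def by blast
    have "z \<noteq> w" using z(2) nl h(4) by blast
    then have "z = x" using z(1) fwx by blast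
    then show ?thesis using z(2) by simp
  qed
  have C: "x \<in> e \<or> (\<exists>w\<in>e. {w,x} \<in> S \<and> degree_in S x = 1)" if "(adj S)\<^sup>*\<^sup>* u x" for x
    using that
  proof (induction rule: rtranclp_induct)
    case base
    then show ?case using euv by blast
  next
    case (step y z)
    have yz: "{y,z} \<in> S" using step.hyps(2) unfolding adj_def .
    have yzne: "y \<noteq> z" using c2 yz by fastforce
    show ?case
    proof (cases "y \<in> e")
      case True
      show ?thesis
      proof (cases "z \<in> e")
        case True then show ?thesis by blast
      next
        case False
        have "{y,z} \<noteq> e" using False by blast
        then have "degree_in S z = 1" using L1[OF yz _ _ \<open>y \<in> e\<close> _ False] by blast
        then show ?thesis using yz \<open>y \<in> e\<close> by blast
      qed
    next
      case False
      then obtain w where w: "w \<in> e" "{w,y} \<in> S" "degree_in S y = 1" using step.IH by blast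
      have "{y,z} = {w,y}" using deg1_unique[OF w(3) yz _ w(2)] by blast
      then have "z = w" using yzne by (metis doubleton_eq_iff)
      then show ?thesis using w(1) by blast
    qed
  qed
  show ?thesis
  proof
    fix f assume f: "f \<in> S"
    obtain x y where xy: "f = {x,y}" "x \<noteq> y" using c2 f unfolding card_2_iff by blast
    have xU: "x \<in> \<Union>S" using f xy by blast
    have uU: "u \<in> \<Union>S" using eS euv by blast
    have "(adj S)\<^sup>*\<^sup>* u x" using conn xU uU unfolding connected_graph_def by blast
    then have "x \<in> e \<or> (\<exists>w\<in>e. {w,x} \<in> S \<and> degree_in S x = 1)" by (rule C)
    then show "u \<in> f \<or> v \<in> f"
    proof
      assume "x \<in> e" then show ?thesis using xy euv by blast
    next
      assume "\<exists>w\<in>e. {w,x} \<in> S \<and> degree_in S x = 1"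
      then obtain w where w: "w \<in> e" "{w,x} \<in> S" "degree_in S x = 1" by blast
      have "f = {w,x}" using deg1_unique[OF w(3) f _ w(2)] xy by blast
      then show ?thesis using w(1) euv by blast
    qed
  qed
qed

lemma triangle:
  assumes "acyclic_graph E" "{u,v} \<in> E" "{v,x} \<in> E" "{u,x} \<in> E" "u \<noteq> v" "x \<noteq> u" "x \<noteq> v"
  shows False
proof -
  have "\<forall>i<length [u,v,x]. {[u,v,x] ! i, [u,v,x] ! ((i + 1) mod length [u,v,x])} \<in> E"
  proof (intro allI impI)
    fix i assume "i < length [u,v,x]"
    then have "i = 0 \<or> i = 1 \<or> i = 2" by auto
    then show "{[u,v,x] ! i, [u,v,x] ! ((i + 1) mod length [u,v,x])} \<in> E"
      using assms(2-4) by (elim disjE) (simp_all add: insert_commute)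
  qed
  moreover have "distinct [u,v,x]" using assms(5-7) by auto
  ultimately have "is_cycle E [u,v,x]" unfolding is_cycle_def by simp
  then show False using assms(1) unfolding acyclic_graph_def by blast
qed

lemma rev_leaf:
  assumes c2E: "\<forall>f\<in>E. card f = 2" and acyc: "acyclic_graph E" and eE: "e \<in> E"
    and euv: "e = {u,v}" and uv: "u \<noteq> v"
    and A: "A \<subseteq> {f\<in>E. u \<in> f \<and> f \<noteq> e}" and B: "B \<subseteq> {f\<in>E. v \<in> f \<and> f \<noteq> e}"
    and f: "f \<in> A"
  shows "leaf_edge (insert e (A \<union> B)) f"
proof -
  have fE: "f \<in> E" "u \<in> f" "f \<noteq> e" using A f by blast+
  obtain x where fx: "f = {u,x}" "x \<noteq> u" using card2_obtain[OF _ fE(2)] c2E fE(1) by blast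
  have xv: "x \<noteq> v" using fx(1) fE(3) euv by blast
  have "{h\<in>insert e (A \<union> B). x \<in> h} = {f}"
  proof (intro equalityI subsetI)
    fix h assume "h \<in> {h\<in>insert e (A \<union> B). x \<in> h}"
    then have h: "h \<in> insert e (A \<union> B)" "x \<in> h" by blast+
    consider "h = e" | "h \<in> A" | "h \<in> B" using h(1) by blast
    then show "h \<in> {f}"
    proof cases
      case 1 then show ?thesis using h(2) euv fx(2) xv by blast
    next
      case 2
      then have "h \<in> E" "u \<in> h" using A by blast+
      then have "h = {u,x}" using card2_eq[OF _ _ h(2) fx(2)[symmetric]] c2E by blast
      then show ?thesis using fx(1) by blast
    next
      case 3
      then have "h \<in> E" "v \<in> h" using B by blast+
      then have "h = {v,x}" using card2_eq[OF _ _ h(2) xv[symmetric]] c2E by blast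
      then have "{v,x} \<in> E" using \<open>h \<in> E\<close> by simp
      then show ?thesis using triangle[OF acyc _ _ _ uv fx(2) xv] eE euv fE(1) fx(1) by blast
    qed
  next
    fix h assume "h \<in> {f}"
    then show "h \<in> {h\<in>insert e (A \<union> B). x \<in> h}" using f fx(1) by blast
  qed
  then have "degree_in (insert e (A \<union> B)) x = 1" unfolding degree_in_def by simp
  then show ?thesis unfolding leaf_edge_def using f fx(1) by blast
qed

lemma deg_two:
  assumes "finite S" "e \<in> S" "a \<in> S" "a \<noteq> e" "z \<in> e" "z \<in> a"
  shows "degree_in S z \<noteq> 1"
proof -
  have "{e,a} \<subseteq> {h\<in>S. z \<in> h}" using assms by blast
  moreover have "finite {h\<in>S. z \<in> h}" using assms(1) by simp
  ultimately have "card {e,a} \<le> card {h\<in>S. z \<in> h}" by (rule card_mono[rotated])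
  moreover have "card {e,a} = 2" using assms(4) by simp
  ultimately show ?thesis unfolding degree_in_def by simp
qed

lemma reach_star:
  assumes c2: "\<forall>f\<in>A. card f = 2" and uA: "\<forall>f\<in>A. u \<in> f" and sub: "A \<subseteq> S" and x: "x \<in> \<Union>A"
  shows "(adj S)\<^sup>*\<^sup>* u x \<and> (adj S)\<^sup>*\<^sup>* x u"
proof -
  obtain h where h: "h \<in> A" "x \<in> h" using x by blast
  obtain y where hy: "h = {u,y}" "y \<noteq> u" using card2_obtain[OF _ uA[rule_format, OF h(1)]] c2 h(1) by blast
  have "adj S u y" "adj S y u" using hy(1) h(1) sub unfolding adj_def by (auto simp: insert_commute)
  moreover have "x = u \<or> x = y" using h(2) hy(1) by blast
  ultimately show ?thesis by auto
qed

lemma rev_main: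
  assumes c2E: "\<forall>f\<in>E. card f = 2" and acyc: "acyclic_graph E" and finE: "finite E" and eE: "e \<in> E"
    and euv: "e = {u,v}" and uv: "u \<noteq> v"
    and A: "A \<subseteq> {f\<in>E. u \<in> f \<and> f \<noteq> e}" and B: "B \<subseteq> {f\<in>E. v \<in> f \<and> f \<noteq> e}"
    and Ane: "A \<noteq> {}" and Bne: "B \<noteq> {}"
  shows "subtree E (insert e (A \<union> B)) \<and> {f\<in>insert e (A \<union> B). interior_edge (insert e (A \<union> B)) f} = {e}"
proof -
  define S where "S = insert e (A \<union> B)"
  have SE: "S \<subseteq> E" using eE A B unfolding S_def by blast
  have finS: "finite S" using finite_subset[OF SE finE] .
  have leafA: "leaf_edge S f" if "f \<in> A" for f
    using rev_leaf[OF c2E acyc eE euv uv A B that] unfolding S_def .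
  have leafB: "leaf_edge S f" if "f \<in> B" for f
  proof -
    have "leaf_edge (insert e (B \<union> A)) f"
      using rev_leaf[OF c2E acyc eE _ _ B A that] euv uv by (simp add: insert_commute)
    then show ?thesis unfolding S_def by (simp add: Un_commute)
  qed
  obtain a where a: "a \<in> A" using Ane by blast
  obtain b where b: "b \<in> B" using Bne by blast
  have du: "degree_in S u \<noteq> 1"
    using deg_two[OF finS, of e a u] a A euv unfolding S_def by blast
  have dv: "degree_in S v \<noteq> 1"
    using deg_two[OF finS, of e b v] b B euv unfolding S_def by blast
  have eS: "e \<in> S" unfolding S_def by blast
  have eint: "interior_edge S e"
    unfolding interior_edge_def leaf_edge_def using eS du dv euv by blast
  have intset: "{f\<in>S. interior_edge S f} = {e}"
  proof (intro equalityI subsetI)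
    fix f assume "f \<in> {f\<in>S. interior_edge S f}"
    then have f: "f \<in> S" "\<not> leaf_edge S f" unfolding interior_edge_def by blast+
    then show "f \<in> {e}" using leafA leafB unfolding S_def by blast
  next
    fix f assume "f \<in> {e}" then show "f \<in> {f\<in>S. interior_edge S f}" using eint eS by blast
  qed
  have adjuv: "adj S u v" "adj S v u" using eS euv unfolding adj_def by (auto simp: insert_commute)
  have reach: "(adj S)\<^sup>*\<^sup>* u x \<and> (adj S)\<^sup>*\<^sup>* x u" if x: "x \<in> \<Union>S" for x
  proof -
    obtain h where h: "h \<in> S" "x \<in> h" using x by blast
    consider "h = e" | "h \<in> A" | "h \<in> B" using h(1) unfolding S_def by blast
    then show ?thesis
    proof cases
      case 1 then have "x = u \<or> x = v" using h(2) euv by blast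
      then show ?thesis using adjuv by auto
    next
      case 2
      have "(adj S)\<^sup>*\<^sup>* u x \<and> (adj S)\<^sup>*\<^sup>* x u"
        by (rule reach_star[of A u S x]) (use A c2E h 2 in \<open>auto simp: S_def\<close>)
      then show ?thesis .
    next
      case 3
      have "(adj S)\<^sup>*\<^sup>* v x \<and> (adj S)\<^sup>*\<^sup>* x v"
        by (rule reach_star[of B v S x]) (use B c2E h 3 in \<open>auto simp: S_def\<close>)
      moreover have "(adj S)\<^sup>*\<^sup>* u v" "(adj S)\<^sup>*\<^sup>* v u" using adjuv by auto
      ultimately show ?thesis by (meson rtranclp_trans)
    qed
  qed
  have conn: "connected_graph (\<Union>S) S"
    unfolding connected_graph_def by (meson reach rtranclp_trans)
  have "subtree E S" unfolding subtree_def using SE eS conn by blast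
  then show ?thesis using intset unfolding S_def by blast
qed

lemma per_edge:
  assumes c2E: "\<forall>f\<in>E. card f = 2" and acyc: "acyclic_graph E" and finE: "finite E"
    and eE: "e \<in> E" and eI: "interior_edge E e"
  shows "(\<Sum>S\<in>{S. subtree E S \<and> {f\<in>S. interior_edge S f} = {e}}. (-1::int) ^ card S) = -1"
proof -
  obtain u v where euv: "e = {u,v}" and uv: "u \<noteq> v" using c2E eE unfolding card_2_iff by blast
  define Xu where "Xu = {f\<in>E. u \<in> f \<and> f \<noteq> e}"
  define Xv where "Xv = {f\<in>E. v \<in> f \<and> f \<noteq> e}"
  have nlE: "\<forall>z\<in>e. degree_in E z \<noteq> 1" using eI unfolding interior_edge_def leaf_edge_def by blast
  have Xune: "Xu \<noteq> {}" using deg_ge2[OF finE eE, of u] nlE euv unfolding Xu_def by blast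
  have Xvne: "Xv \<noteq> {}" using deg_ge2[OF finE eE, of v] nlE euv unfolding Xv_def by blast
  have finXu: "finite Xu" "finite Xv" using finE unfolding Xu_def Xv_def by simp_all
  have noB: "u \<notin> f" if "f \<in> Xv" for f
  proof
    assume "u \<in> f"
    have "f \<in> E" "v \<in> f" "f \<noteq> e" using that unfolding Xv_def by blast+
    then have "f = {v,u}" using card2_eq[OF _ _ \<open>u \<in> f\<close>] uv c2E by blast
    then show False using \<open>f \<noteq> e\<close> euv by (simp add: insert_commute)
  qed
  have noA: "v \<notin> f" if "f \<in> Xu" for f
  proof
    assume "v \<in> f"
    have "f \<in> E" "u \<in> f" "f \<noteq> e" using that unfolding Xu_def by blast+
    then have "f = {u,v}" using card2_eq[OF _ _ \<open>v \<in> f\<close>] uv c2E by blast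
    then show False using \<open>f \<noteq> e\<close> euv by simp
  qed
  define PA where "PA = {A. A \<subseteq> Xu \<and> A \<noteq> {}}"
  define PB where "PB = {B. B \<subseteq> Xv \<and> B \<noteq> {}}"
  define g where "g = (\<lambda>(A::'a set set,B::'a set set). insert e (A \<union> B))"
  have recA: "{f\<in>insert e (A \<union> B). u \<in> f \<and> f \<noteq> e} = A" if "A \<subseteq> Xu" "B \<subseteq> Xv" for A B
    using that noB unfolding Xu_def by blast
  have recB: "{f\<in>insert e (A \<union> B). v \<in> f \<and> f \<noteq> e} = B" if "A \<subseteq> Xu" "B \<subseteq> Xv" for A B
    using that noA unfolding Xv_def by blast
  have inj: "inj_on g (PA \<times> PB)"
  proof (rule inj_onI)
    fix p q assume p: "p \<in> PA \<times> PB" and q: "q \<in> PA \<times> PB" and gpq: "g p = g q"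
    obtain A B where pAB: "p = (A,B)" by (cases p)
    obtain A' B' where qAB: "q = (A',B')" by (cases q)
    have s: "A \<subseteq> Xu" "B \<subseteq> Xv" "A' \<subseteq> Xu" "B' \<subseteq> Xv" using p q pAB qAB unfolding PA_def PB_def by auto
    have gg: "insert e (A \<union> B) = insert e (A' \<union> B')" using gpq pAB qAB unfolding g_def by simp
    have "A = A'" using recA[OF s(1,2)] recA[OF s(3,4)] gg by simp
    moreover have "B = B'" using recB[OF s(1,2)] recB[OF s(3,4)] gg by simp
    ultimately show "p = q" using pAB qAB by simp
  qed
  have img: "{S. subtree E S \<and> {f\<in>S. interior_edge S f} = {e}} = g ` (PA \<times> PB)"
  proof (intro equalityI subsetI)
    fix S assume "S \<in> {S. subtree E S \<and> {f\<in>S. interior_edge S f} = {e}}"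
    then have st: "subtree E S" and isE: "{f\<in>S. interior_edge S f} = {e}" by blast+
    have SE: "S \<subseteq> E" and conn: "connected_graph (\<Union>S) S" using st unfolding subtree_def by blast+
    have finS: "finite S" using finite_subset[OF SE finE] .
    have c2: "\<forall>f\<in>S. card f = 2" using SE c2E by blast
    have eint: "interior_edge S e" using isE by blast
    have eS: "e \<in> S" using eint unfolding interior_edge_def by blast
    have others: "\<forall>f\<in>S. f \<noteq> e \<longrightarrow> leaf_edge S f"
      using isE unfolding interior_edge_def by blast
    have meets: "\<forall>f\<in>S. u \<in> f \<or> v \<in> f" using fwd[OF finS c2 conn eS eint others euv] .
    have nlS: "\<forall>z\<in>e. degree_in S z \<noteq> 1" using eint unfolding interior_edge_def leaf_edge_def by blast
    define A where "A = {f\<in>S. u \<in> f \<and> f \<noteq> e}"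
    define B where "B = {f\<in>S. v \<in> f \<and> f \<noteq> e}"
    have "A \<noteq> {}" using deg_ge2[OF finS eS, of u] nlS euv unfolding A_def by blast
    moreover have "B \<noteq> {}" using deg_ge2[OF finS eS, of v] nlS euv unfolding B_def by blast
    moreover have "A \<subseteq> Xu" "B \<subseteq> Xv" using SE unfolding A_def B_def Xu_def Xv_def by blast+
    moreover have "S = insert e (A \<union> B)" using meets eS unfolding A_def B_def by blast
    ultimately show "S \<in> g ` (PA \<times> PB)" unfolding PA_def PB_def g_def by blast
  next
    fix S assume "S \<in> g ` (PA \<times> PB)"
    then obtain A B where AB: "A \<subseteq> Xu" "A \<noteq> {}" "B \<subseteq> Xv" "B \<noteq> {}" and S: "S = insert e (A \<union> B)"
      unfolding PA_def PB_def g_def by blast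
    have "subtree E S \<and> {f\<in>S. interior_edge S f} = {e}"
      unfolding S using rev_main[OF c2E acyc finE eE euv uv _ _ AB(2) AB(4)] AB(1,3)
      unfolding Xu_def Xv_def by blast
    then show "S \<in> {S. subtree E S \<and> {f\<in>S. interior_edge S f} = {e}}" by blast
  qed
  have tm: "(-1::int) ^ card (g p) = - ((-1) ^ card (fst p) * (-1) ^ card (snd p))" if p: "p \<in> PA \<times> PB" for p
  proof -
    obtain A B where pAB: "p = (A,B)" by (cases p)
    have s: "A \<subseteq> Xu" "B \<subseteq> Xv" using p pAB unfolding PA_def PB_def by auto
    have fin: "finite A" "finite B" using s finXu finite_subset by blast+
    have dis: "A \<inter> B = {}" using s noB unfolding Xu_def by blast
    have eno: "e \<notin> A \<union> B" using s unfolding Xu_def Xv_def by blast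
    have "card (g p) = Suc (card A + card B)"
      using pAB fin dis eno by (simp add: g_def card_Un_disjoint)
    then show ?thesis using pAB by (simp add: power_add)
  qed
  have "(\<Sum>S\<in>{S. subtree E S \<and> {f\<in>S. interior_edge S f} = {e}}. (-1::int) ^ card S)
      = (\<Sum>p\<in>PA \<times> PB. (-1::int) ^ card (g p))"
    unfolding img by (rule sum.reindex[OF inj, unfolded comp_def])
  also have "\<dots> = (\<Sum>p\<in>PA \<times> PB. - ((-1) ^ card (fst p) * (-1) ^ card (snd p)))"
    by (rule sum.cong) (simp_all add: tm)
  also have "\<dots> = - ((\<Sum>A\<in>PA. (-1::int) ^ card A) * (\<Sum>B\<in>PB. (-1::int) ^ card B))"
    by (simp add: sum_negf sum_product sum.cartesian_product case_prod_beta)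
  also have "\<dots> = -1"
    unfolding PA_def PB_def using nonempty_alt[OF finXu(1) Xune] nonempty_alt[OF finXu(2) Xvne] by simp
  finally show ?thesis .
qed

theorem theorem4p7:
  fixes V :: "'a set" and E :: "'a set set"
  assumes "is_tree V E"
  shows "(\<Sum>S\<in>{S. subtree E S \<and> card {e\<in>S. interior_edge S e} = 1}. (-1::int) ^ card S)
           = - int (card {e\<in>E. interior_edge E e})"
proof -
  have sg: "simple_graph V E" and acyc: "acyclic_graph E" using assms unfolding is_tree_def by blast+
  have finV: "finite V" and EV: "\<forall>e\<in>E. e \<subseteq> V \<and> card e = 2" using sg unfolding simple_graph_def by blast+
  have c2E: "\<forall>f\<in>E. card f = 2" using EV by blast
  have finE: "finite E" using finite_subset[of E "Pow V"] finV EV by blast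
  define I where "I = {e\<in>E. interior_edge E e}"
  define D where "D = (\<lambda>e. {S. subtree E S \<and> {f\<in>S. interior_edge S f} = {e}})"
  have U: "{S. subtree E S \<and> card {e\<in>S. interior_edge S e} = 1} = (\<Union>e\<in>I. D e)"
  proof (intro equalityI subsetI)
    fix S assume "S \<in> {S. subtree E S \<and> card {e\<in>S. interior_edge S e} = 1}"
    then have st: "subtree E S" and c1: "card {e\<in>S. interior_edge S e} = 1" by blast+
    obtain e where ee: "{e\<in>S. interior_edge S e} = {e}" using c1 by (rule card_1_singletonE)
    have SE: "S \<subseteq> E" using st unfolding subtree_def by blast
    have finS: "finite S" using finite_subset[OF SE finE] .
    have eint: "interior_edge S e" using ee by blast
    have eS: "e \<in> S" using eint unfolding interior_edge_def by blast
    have eE: "e \<in> E" using eS SE by blast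
    have nlS: "\<forall>z\<in>e. degree_in S z \<noteq> 1" using eint unfolding interior_edge_def leaf_edge_def by blast
    have "\<forall>z\<in>e. degree_in E z \<noteq> 1"
    proof
      fix z assume z: "z \<in> e"
      obtain a where a: "a \<in> S" "z \<in> a" "a \<noteq> e" using deg_ge2[OF finS eS z] nlS z by blast
      show "degree_in E z \<noteq> 1" using deg_two[OF finE eE _ a(3) z a(2)] a(1) SE by blast
    qed
    then have "interior_edge E e" using eE unfolding interior_edge_def leaf_edge_def by blast
    then have "e \<in> I" using eE unfolding I_def by blast
    moreover have "S \<in> D e" using st ee unfolding D_def by blast
    ultimately show "S \<in> (\<Union>e\<in>I. D e)" by blast
  next
    fix S assume "S \<in> (\<Union>e\<in>I. D e)"
    then obtain e where "S \<in> D e" by blast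
    then show "S \<in> {S. subtree E S \<and> card {e\<in>S. interior_edge S e} = 1}" unfolding D_def by simp
  qed
  have finI: "finite I" using finE unfolding I_def by simp
  have finD: "\<forall>e\<in>I. finite (D e)"
  proof
    fix e assume "e \<in> I"
    have "D e \<subseteq> Pow E" unfolding D_def subtree_def by blast
    then show "finite (D e)" using finite_subset finE by blast
  qed
  have disj: "\<forall>i\<in>I. \<forall>j\<in>I. i \<noteq> j \<longrightarrow> D i \<inter> D j = {}" unfolding D_def by blast
  have "(\<Sum>S\<in>{S. subtree E S \<and> card {e\<in>S. interior_edge S e} = 1}. (-1::int) ^ card S)
      = (\<Sum>e\<in>I. \<Sum>S\<in>D e. (-1::int) ^ card S)"
    unfolding U by (rule sum.UNION_disjoint[OF finI finD disj])
  also have "\<dots> = (\<Sum>e\<in>I. (-1::int))"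
  proof (rule sum.cong)
    fix e assume "e \<in> I"
    then have "e \<in> E" "interior_edge E e" unfolding I_def by blast+
    then show "(\<Sum>S\<in>D e. (-1::int) ^ card S) = -1"
      unfolding D_def using per_edge[OF c2E acyc finE] by blast
  qed simp
  also have "\<dots> = - int (card I)" by simp
  finally show ?thesis unfolding I_def .
qed

end
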